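(* Let $c$ and $e$ be confocal ellipses with $c$ in the interior of $e$, and let $P_1P_2\dots P_N$ be an $N$-periodic billiard in $e$ with caustic $c$, with exterior angles $\theta_1,\dots,\theta_N$ at $P_1,\dots,P_N$. If $N\equiv 0\pmod 2$, then \[\sum_{i=1}^N(-1)^i\sin\theta_i=0,\] and if $N\equiv 0\pmod 4$, then \[\sum_{i=1}^{N/2}(-1)^i\sin\theta_i=0.\]
   Context: A billiard in $e$ with caustic $c$ is a sequence of points $P_1,P_2,\dots$ on $e$ such that each line $P_iP_{i+1}$ is tangent to $c$ and $P_{i-1}P_i$, $P_iP_{i+1}$ are the two tangents from $P_i$ to $c$; it is traversed counterclockwise and is $N$-periodic if $P_{i+N}=P_i$ for all $i$ (indices mod $N$). The exterior angle $\theta_i$ at $P_i$ is the angle between the directions $\overrightarrow{P_{i-1}P_i}$ and $\overrightarrow{P_iP_{i+1}}$; equivalently $\theta_i/2$ is the angle between each tangent from $P_i$ to $c$ and the tangent of $e$ at $P_i$. *)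

theory Defs
  imports "HOL-Analysis.Analysis"
begin

definition ellipse :: "complex \<Rightarrow> complex \<Rightarrow> real \<Rightarrow> complex set" where
  "ellipse F1 F2 s = {X. dist X F1 + dist X F2 = 2 * s}"

definition is_ellipse_param :: "complex \<Rightarrow> complex \<Rightarrow> real \<Rightarrow> bool" where
  "is_ellipse_param F1 F2 s \<longleftrightarrow> 2 * s > dist F1 F2"

definition on_line :: "complex \<Rightarrow> complex \<Rightarrow> complex \<Rightarrow> bool" where
  "on_line A B X \<longleftrightarrow> (\<exists>t::real. X = A + of_real t * (B - A))"

definition tangent_line :: "complex set \<Rightarrow> complex \<Rightarrow> complex \<Rightarrow> bool" where
  "tangent_line C A B \<longleftrightarrow> A \<noteq> B \<and> (\<exists>!X. X \<in> C \<and> on_line A B X)"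

text \<open>Cross product (signed area): positive iff v is obtained from u by a left turn.\<close>

definition cross2 :: "complex \<Rightarrow> complex \<Rightarrow> real" where
  "cross2 u v = Re u * Im v - Im u * Re v"

text \<open>Vertices P i on E, each line P i P (i+1) tangent to C, the two lines through P i
  are distinct (the two tangents from P i), and the polygon turns left at each vertex.\<close>

definition periodic_billiard :: "complex set \<Rightarrow> complex set \<Rightarrow> nat \<Rightarrow> (int \<Rightarrow> complex) \<Rightarrow> bool" where
  "periodic_billiard E C N P \<longleftrightarrow>
     (\<forall>i. P i \<in> E) \<and>
     (\<forall>i. tangent_line C (P i) (P (i + 1))) \<and>
     (\<forall>i. \<not> on_line (P (i - 1)) (P i) (P (i + 1))) \<and>
     (\<forall>i. cross2 (P i - P (i - 1)) (P (i + 1) - P i) > 0) \<and>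
     (\<forall>i. P (i + int N) = P i)"

definition vec_angle :: "complex \<Rightarrow> complex \<Rightarrow> real" where
  "vec_angle u v = arccos ((u \<bullet> v) / (norm u * norm v))"

definition ext_angle :: "(int \<Rightarrow> complex) \<Rightarrow> int \<Rightarrow> real" where
  "ext_angle P i = vec_angle (P i - P (i - 1)) (P (i + 1) - P i)"

end

theory Submission
  imports Defs
begin

lemma ellipse_std_iff:
  fixes f s :: real and z :: complex
  assumes f0: "0 \<le> f" and fs: "f < s"
  shows "z \<in> ellipse (of_real f) (- of_real f) s \<longleftrightarrow> (Re z)^2 / s^2 + (Im z)^2 / (s^2 - f^2) = 1"
proof -
  define x where "x = Re z"
  define y where "y = Im z"
  have s0: "s > 0" using f0 fs by linarith
  have d1: "dist z (of_real f) = sqrt ((x - f)^2 + y^2)"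
    by (simp add: dist_norm cmod_def x_def y_def power2_eq_square)
  have d2: "dist z (- of_real f) = sqrt ((x + f)^2 + y^2)"
    by (simp add: dist_norm cmod_def x_def y_def power2_eq_square)
  have sf: "s^2 - f^2 > 0" using f0 fs s0 by (smt (verit) mult_strict_mono power2_eq_square)
  show ?thesis
  proof
    assume "z \<in> ellipse (of_real f) (- of_real f) s"
    then have h: "sqrt ((x - f)^2 + y^2) + sqrt ((x + f)^2 + y^2) = 2 * s"
      unfolding ellipse_def using d1 d2 by simp
    define r1 where "r1 = sqrt ((x - f)^2 + y^2)"
    define r2 where "r2 = sqrt ((x + f)^2 + y^2)"
    have r1s: "r1^2 = (x - f)^2 + y^2" unfolding r1_def by simp
    have r2s: "r2^2 = (x + f)^2 + y^2" unfolding r2_def by simp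
    have sum: "r1 + r2 = 2 * s" using h r1_def r2_def by simp
    have "r2^2 - r1^2 = 4 * f * x" using r1s r2s by (simp add: algebra_simps power2_eq_square)
    then have "(r2 - r1) * (r1 + r2) = 4 * f * x" by (simp add: algebra_simps power2_eq_square)
    then have "(r2 - r1) * (2 * s) = 4 * f * x" using sum by simp
    then have "r2 - r1 = 2 * f * x / s" using s0 by (simp add: field_simps)
    then have r1e: "r1 = s - f * x / s" using sum by (simp add: field_simps)
    have "(s - f * x / s)^2 = (x - f)^2 + y^2" using r1s r1e by simp
    then have "s^2 * (s - f * x / s)^2 = s^2 * ((x - f)^2 + y^2)" by simp
    moreover have "s^2 * (s - f * x / s)^2 = (s^2 - f * x)^2" using s0 by (simp add: field_simps power2_eq_square)
    ultimately have e: "(s^2 - f*x)^2 = s^2 * ((x - f)^2 + y^2)" by simp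
    have "x^2 * (s^2 - f^2) + y^2 * s^2 = s^2 * (s^2 - f^2)"
      using e by (simp add: algebra_simps power2_eq_square)
    moreover have "x^2 / s^2 + y^2 / (s^2 - f^2) = (x^2 * (s^2 - f^2) + y^2 * s^2) / (s^2 * (s^2 - f^2))"
      using s0 sf by (simp add: field_simps)
    ultimately have "x^2 / s^2 + y^2 / (s^2 - f^2) = 1" using s0 sf by simp
    then show "(Re z)^2 / s^2 + (Im z)^2 / (s^2 - f^2) = 1" by (simp add: x_def y_def)
  next
    assume "(Re z)^2 / s^2 + (Im z)^2 / (s^2 - f^2) = 1"
    then have "x^2 / s^2 + y^2 / (s^2 - f^2) = 1" by (simp add: x_def y_def)
    moreover have "x^2 / s^2 + y^2 / (s^2 - f^2) = (x^2 * (s^2 - f^2) + y^2 * s^2) / (s^2 * (s^2 - f^2))"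
      using s0 sf by (simp add: field_simps)
    ultimately have eq: "x^2 * (s^2 - f^2) + y^2 * s^2 = s^2 * (s^2 - f^2)" using s0 sf by simp
    have "x^2 * (s^2 - f^2) \<le> s^2 * (s^2 - f^2)" using eq
      by (smt (verit) mult_nonneg_nonneg zero_le_power2 s0)
    then have "x^2 \<le> s^2" using sf by simp
    then have ax: "\<bar>x\<bar> \<le> s" using s0 by (metis abs_le_square_iff abs_of_pos)
    have fx: "\<bar>f * x\<bar> \<le> f * s" using ax f0 by (simp add: abs_mult mult_left_mono)
    have fs2: "f * s < s * s" using fs s0 by simp
    have p1: "s^2 - f*x \<ge> 0" using fx fs2 by (simp add: power2_eq_square abs_le_iff)
    have p2: "s^2 + f*x \<ge> 0" using fx fs2 by (simp add: power2_eq_square abs_le_iff)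
    have "(x - f)^2 + y^2 = ((s^2 - f*x)/s)^2"
      using eq s0 by (simp add: field_simps power2_eq_square)
    then have q1: "sqrt ((x - f)^2 + y^2) = (s^2 - f*x)/s" using p1 s0 by simp
    have "(x + f)^2 + y^2 = ((s^2 + f*x)/s)^2"
      using eq s0 by (simp add: field_simps power2_eq_square)
    then have q2: "sqrt ((x + f)^2 + y^2) = (s^2 + f*x)/s" using p2 s0 by simp
    show "z \<in> ellipse (of_real f) (- of_real f) s"
    proof -
      have "(s^2 - f*x)/s + (s^2 + f*x)/s = 2 * s" using s0 by (simp add: field_simps power2_eq_square)
      then show ?thesis unfolding ellipse_def using d1 d2 q1 q2 by simp
    qed
  qed
qed

definition pt :: "real \<Rightarrow> real \<Rightarrow> real \<Rightarrow> real \<Rightarrow> complex" where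
  "pt A B s r = Complex (sqrt A * (cos s - r * sin s)) (sqrt B * (sin s + r * cos s))"

lemma tangent_param:
  fixes A B :: real and C :: "complex set" and X Y :: complex
  assumes A0: "A > 0" and B0: "B > 0"
    and memb: "\<And>z. z \<in> C \<longleftrightarrow> (Re z)^2 / A + (Im z)^2 / B = 1"
    and tl: "tangent_line C X Y"
  shows "\<exists>s r r'. X = pt A B s r \<and> Y = pt A B s r' \<and> r \<noteq> r'"
proof -
  have XY: "X \<noteq> Y" and ex1: "\<exists>!Z. Z \<in> C \<and> on_line X Y Z" using tl unfolding tangent_line_def by auto
  then obtain Z where ZC: "Z \<in> C" and Zl: "on_line X Y Z" by auto
  have uniq: "\<And>Z'. Z' \<in> C \<Longrightarrow> on_line X Y Z' \<Longrightarrow> Z' = Z" using ex1 ZC Zl by auto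
  obtain t0 :: real where Zt: "Z = X + of_real t0 * (Y - X)" using Zl unfolding on_line_def by auto
  have sA: "sqrt A > 0" and sB: "sqrt B > 0" using A0 B0 by auto
  have sA2: "(sqrt A)^2 = A" and sB2: "(sqrt B)^2 = B" using A0 B0 by auto
  define p where "p = Re Z / sqrt A"
  define q where "q = Im Z / sqrt B"
  have "(Re Z)^2 / A + (Im Z)^2 / B = 1" using ZC memb by auto
  then have pq: "p^2 + q^2 = 1" unfolding p_def q_def using sA2 sB2 by (simp add: power_divide)
  obtain s where cs: "p = cos s" "q = sin s" using sincos_total_2pi[OF pq] by metis
  define wx where "wx = (Re Y - Re X) / sqrt A"
  define wy where "wy = (Im Y - Im X) / sqrt B"
  have w0: "wx^2 + wy^2 \<noteq> 0"
  proof
    assume "wx^2 + wy^2 = 0"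
    then have "wx = 0" "wy = 0" by (auto simp: sum_power2_eq_zero_iff)
    then have "Re Y = Re X" "Im Y = Im X" unfolding wx_def wy_def using sA sB by auto
    then show False using XY complex_eqI by metis
  qed
  define \<tau> where "\<tau> = - 2 * (p * wx + q * wy) / (wx^2 + wy^2)"
  define Z2 where "Z2 = X + of_real (t0 + \<tau>) * (Y - X)"
  have reZ2: "Re Z2 = sqrt A * (p + \<tau> * wx)" unfolding Z2_def p_def wx_def Zt using sA
    by (simp add: field_simps)
  have imZ2: "Im Z2 = sqrt B * (q + \<tau> * wy)" unfolding Z2_def q_def wy_def Zt using sB
    by (simp add: field_simps)
  have "(p + \<tau> * wx)^2 + (q + \<tau> * wy)^2 = 1 + \<tau> * (2 * (p * wx + q * wy) + \<tau> * (wx^2 + wy^2))"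
    using pq by (simp add: algebra_simps power2_eq_square)
  also have "2 * (p * wx + q * wy) + \<tau> * (wx^2 + wy^2) = 0" unfolding \<tau>_def using w0 by (simp add: field_simps)
  finally have "(p + \<tau> * wx)^2 + (q + \<tau> * wy)^2 = 1" by simp
  then have "(Re Z2)^2 / A + (Im Z2)^2 / B = 1" unfolding reZ2 imZ2 using A0 B0 sA2 sB2
    by (simp add: power_mult_distrib)
  then have "Z2 \<in> C" using memb by auto
  moreover have "on_line X Y Z2" unfolding on_line_def Z2_def by (rule exI[of _ "t0 + \<tau>"]) simp
  ultimately have "Z2 = Z" using uniq by auto
  then have "of_real \<tau> * (Y - X) = 0" unfolding Z2_def Zt by (simp add: algebra_simps)
  then have "\<tau> = 0" using XY by simp
  then have orth: "p * wx + q * wy = 0" unfolding \<tau>_def using w0 by (simp add: field_simps) linarith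
  define \<kappa> where "\<kappa> = - q * wx + p * wy"
  have wxk: "wx = - \<kappa> * sin s"
  proof -
    have "wx = wx * (p^2 + q^2)" using pq by simp
    also have "\<dots> = - q * \<kappa> + p * (p * wx + q * wy)" by (simp add: \<kappa>_def algebra_simps power2_eq_square)
    finally show ?thesis using orth cs by simp
  qed
  have wyk: "wy = \<kappa> * cos s"
  proof -
    have "wy = wy * (p^2 + q^2)" using pq by simp
    also have "\<dots> = p * \<kappa> + q * (p * wx + q * wy)" by (simp add: \<kappa>_def algebra_simps power2_eq_square)
    finally show ?thesis using orth cs by simp
  qed
  define r where "r = - t0 * \<kappa>"
  have reX: "Re X = sqrt A * (cos s - r * sin s)"
  proof -
    have "Re Z = Re X + t0 * (sqrt A * wx)" unfolding Zt wx_def using sA by simp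
    then have "Re X = sqrt A * p - t0 * (sqrt A * wx)" unfolding p_def using sA by simp
    then show ?thesis unfolding r_def wxk cs by (simp add: algebra_simps)
  qed
  have imX: "Im X = sqrt B * (sin s + r * cos s)"
  proof -
    have "Im Z = Im X + t0 * (sqrt B * wy)" unfolding Zt wy_def using sB by simp
    then have "Im X = sqrt B * q - t0 * (sqrt B * wy)" unfolding q_def using sB by simp
    then show ?thesis unfolding r_def wyk cs by (simp add: algebra_simps)
  qed
  have reY: "Re Y = sqrt A * (cos s - (r + \<kappa>) * sin s)"
  proof -
    have "Re Y = Re X + sqrt A * wx" unfolding wx_def using sA by simp
    then show ?thesis using reX wxk by (simp add: algebra_simps)
  qed
  have imY: "Im Y = sqrt B * (sin s + (r + \<kappa>) * cos s)"
  proof -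
    have "Im Y = Im X + sqrt B * wy" unfolding wy_def using sB by simp
    then show ?thesis using imX wyk by (simp add: algebra_simps)
  qed
  have k0: "\<kappa> \<noteq> 0"
  proof
    assume "\<kappa> = 0"
    then have "wx = 0" "wy = 0" using wxk wyk by auto
    then show False using w0 by simp
  qed
  have "X = pt A B s r" unfolding pt_def using reX imX by (simp add: complex_eq_iff)
  moreover have "Y = pt A B s (r + \<kappa>)" unfolding pt_def using reY imY by (simp add: complex_eq_iff)
  ultimately show ?thesis using k0 by fastforce
qed

definition qa :: "real \<Rightarrow> real \<Rightarrow> real \<Rightarrow> real \<Rightarrow> real \<Rightarrow> real" where
  "qa A B a2 b2 s = (A / a2) * (sin s)^2 + (B / b2) * (cos s)^2"
definition qb :: "real \<Rightarrow> real \<Rightarrow> real \<Rightarrow> real \<Rightarrow> real \<Rightarrow> real" where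
  "qb A B a2 b2 s = 2 * (B / b2 - A / a2) * sin s * cos s"
definition qc :: "real \<Rightarrow> real \<Rightarrow> real \<Rightarrow> real \<Rightarrow> real \<Rightarrow> real" where
  "qc A B a2 b2 s = (A / a2) * (cos s)^2 + (B / b2) * (sin s)^2 - 1"

lemma onE_pt:
  assumes "A > 0" "B > 0"
  shows "(Re (pt A B s r))^2 / a2 + (Im (pt A B s r))^2 / b2 = 1 \<longleftrightarrow>
     qa A B a2 b2 s * r^2 + qb A B a2 b2 s * r + qc A B a2 b2 s = 0"
proof -
  have "(Re (pt A B s r))^2 / a2 + (Im (pt A B s r))^2 / b2 =
      A * (cos s - r * sin s)^2 / a2 + B * (sin s + r * cos s)^2 / b2"
    using assms by (simp add: pt_def power_mult_distrib)
  also have "\<dots> = (A / a2) * (cos s - r * sin s)^2 + (B / b2) * (sin s + r * cos s)^2" by simp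
  also have "\<dots> = qa A B a2 b2 s * r^2 + qb A B a2 b2 s * r + qc A B a2 b2 s + 1"
    unfolding qa_def qb_def qc_def by (simp add: algebra_simps power2_eq_square)
  finally show ?thesis by linarith
qed

lemma sc_nz: "sin (s::real) \<noteq> 0 \<or> cos s \<noteq> 0"
proof (rule ccontr)
  assume "\<not> (sin s \<noteq> 0 \<or> cos s \<noteq> 0)"
  then have "(sin s)^2 + (cos s)^2 = 0" by simp
  then show False using sin_cos_squared_add[of s] by simp
qed

lemma qa_pos:
  assumes "A > 0" "B > 0" "a2 > 0" "b2 > 0"
  shows "qa A B a2 b2 s > 0"
proof -
  have "(A / a2) * (sin s)^2 \<ge> 0" "(B / b2) * (cos s)^2 \<ge> 0" using assms by auto
  moreover have "sin s \<noteq> 0 \<or> cos s \<noteq> 0" using sc_nz by blast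
  then have "(A / a2) * (sin s)^2 > 0 \<or> (B / b2) * (cos s)^2 > 0" using assms by auto
  ultimately show ?thesis unfolding qa_def by linarith
qed

lemma qc_neg:
  assumes "A > 0" "B > 0" "A < a2" "B < b2"
  shows "qc A B a2 b2 s < 0"
proof -
  have a2: "a2 > 0" "b2 > 0" using assms by auto
  have l1: "A / a2 < 1" "B / b2 < 1" using assms a2 by auto
  have h1: "(A / a2) * (cos s)^2 \<le> (cos s)^2" using mult_right_mono[OF less_imp_le[OF l1(1)] zero_le_power2[of "cos s"]] by simp
  have h2: "(B / b2) * (sin s)^2 \<le> (sin s)^2" using mult_right_mono[OF less_imp_le[OF l1(2)] zero_le_power2[of "sin s"]] by simp
  have "sin s \<noteq> 0 \<or> cos s \<noteq> 0" using sc_nz by blast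
  then have "(A / a2) * (cos s)^2 < (cos s)^2 \<or> (B / b2) * (sin s)^2 < (sin s)^2"
  proof
    assume "sin s \<noteq> 0"
    then have "(sin s)^2 > 0" by simp
    then show ?thesis using mult_strict_right_mono[OF l1(2)] by auto
  next
    assume "cos s \<noteq> 0"
    then have "(cos s)^2 > 0" by simp
    then show ?thesis using mult_strict_right_mono[OF l1(1)] by auto
  qed
  then show ?thesis unfolding qc_def using h1 h2 sin_cos_squared_add[of s] by linarith
qed

lemma quad_two_roots:
  fixes a b c r1 r2 :: real
  assumes "a > 0" "c < 0" "a * r1^2 + b * r1 + c = 0" "a * r2^2 + b * r2 + c = 0" "r1 \<noteq> r2"
  shows "r1 * r2 < 0" "a * (r1 + r2) + b = 0"
proof -
  have "a * (r1^2 - r2^2) + b * (r1 - r2) = 0" using assms by (simp add: algebra_simps)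
  then have "(r1 - r2) * (a * (r1 + r2) + b) = 0" by (simp add: algebra_simps power2_eq_square)
  then show s: "a * (r1 + r2) + b = 0" using assms by simp
  then have bb: "b = - a * (r1 + r2)" by simp
  have "a * r1^2 + (- a * (r1 + r2)) * r1 + c = 0" using assms(3) unfolding bb .
  then have "a * (r1 * r2) = c" by (simp add: algebra_simps power2_eq_square)
  then have "a * (r1 * r2) < 0" using assms by simp
  then show "r1 * r2 < 0" using assms by (simp add: mult_less_0_iff)
qed

lemma cos_2arctan: "cos (2 * arctan r) = (1 - r^2) / (1 + r^2)"
proof -
  have p: "1 + r^2 > 0" by (simp add: add_pos_nonneg)
  have "cos (2 * arctan r) = (cos (arctan r))^2 - (sin (arctan r))^2" by (simp add: cos_double)
  also have "\<dots> = (1 - r^2) / (1 + r^2)" using p by (simp add: cos_arctan sin_arctan power_divide diff_divide_distrib)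
  finally show ?thesis .
qed

lemma sin_2arctan: "sin (2 * arctan r) = 2 * r / (1 + r^2)"
proof -
  have p: "1 + r^2 > 0" by (simp add: add_pos_nonneg)
  have "sin (2 * arctan r) = 2 * sin (arctan r) * cos (arctan r)" by (simp add: sin_double)
  also have "\<dots> = 2 * r / (1 + r^2)" using p by (simp add: cos_arctan sin_arctan)
  finally show ?thesis .
qed

lemma cross2_pt:
  assumes "A > 0" "B > 0"
  shows "cross2 (pt A B s r1 - pt A B s r0) (pt A B s' m1 - pt A B s' m0) =
    sqrt A * sqrt B * ((r1 - r0) * (m1 - m0) * (cos s * sin s' - sin s * cos s'))"
  unfolding cross2_def pt_def by (simp add: algebra_simps)

lemma pt_eq_iff:
  assumes "A > 0" "B > 0"
  shows "pt A B s r = pt A B s' m \<longleftrightarrow> cos s - r * sin s = cos s' - m * sin s' \<and> sin s + r * cos s = sin s' + m * cos s'"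
  using assms unfolding pt_def by (simp add: complex_eq_iff)

lemma gen_div_diff: "(a::real) * (b/d) - c * (e/d) = (a*b - c*e)/d" by (simp add: diff_divide_distrib)
lemma gen_div_add: "(a::real) * (b/d) + c * (e/d) = (a*b + c*e)/d" by (simp add: add_divide_distrib)

lemma vertex:
  fixes A B a2 b2 s s' r0 r1 m0 m1 :: real
  assumes A0: "A > 0" and B0: "B > 0" and Aa: "A < a2" and Bb: "B < b2"
    and X1: "pt A B s r1 = pt A B s' m0"
    and e0: "qa A B a2 b2 s * r0^2 + qb A B a2 b2 s * r0 + qc A B a2 b2 s = 0"
    and e1: "qa A B a2 b2 s * r1^2 + qb A B a2 b2 s * r1 + qc A B a2 b2 s = 0"
    and e1': "qa A B a2 b2 s' * m0^2 + qb A B a2 b2 s' * m0 + qc A B a2 b2 s' = 0"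
    and e2: "qa A B a2 b2 s' * m1^2 + qb A B a2 b2 s' * m1 + qc A B a2 b2 s' = 0"
    and ne0: "r0 \<noteq> r1" and ne1: "m0 \<noteq> m1"
    and cr: "cross2 (pt A B s r1 - pt A B s r0) (pt A B s' m1 - pt A B s' m0) > 0"
  shows "r1 > 0 \<and> m0 = - r1 \<and> cos s' = cos (s + 2 * arctan r1) \<and> sin s' = sin (s + 2 * arctan r1)"
proof -
  have a20: "a2 > 0" and b20: "b2 > 0" using A0 B0 Aa Bb by auto
  have qa0: "qa A B a2 b2 s > 0" "qa A B a2 b2 s' > 0" using qa_pos A0 B0 a20 b20 by auto
  have qc0: "qc A B a2 b2 s < 0" "qc A B a2 b2 s' < 0" using qc_neg A0 B0 Aa Bb by auto
  have rr: "r0 * r1 < 0" using quad_two_roots(1)[OF qa0(1) qc0(1) e0 e1 ne0] .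
  have mm: "m0 * m1 < 0" using quad_two_roots(1)[OF qa0(2) qc0(2) e1' e2 ne1] .
  have E1: "cos s - r1 * sin s = cos s' - m0 * sin s'" and E2: "sin s + r1 * cos s = sin s' + m0 * cos s'"
    using X1 pt_eq_iff[OF A0 B0] by auto
  have nrm: "(cos x - r * sin x)^2 + (sin x + r * cos x)^2 = 1 + r^2" for x r :: real
  proof -
    have "(cos x - r * sin x)^2 + (sin x + r * cos x)^2 = (1 + r^2) * ((sin x)^2 + (cos x)^2)"
      by algebra
    then show ?thesis by simp
  qed
  have "(cos s - r1 * sin s)^2 + (sin s + r1 * cos s)^2 = 1 + r1^2" by (rule nrm)
  moreover have "(cos s' - m0 * sin s')^2 + (sin s' + m0 * cos s')^2 = 1 + m0^2" by (rule nrm)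
  ultimately have "r1^2 = m0^2" using E1 E2 by simp
  then have m0c: "m0 = r1 \<or> m0 = - r1" by (metis power2_eq_iff)
  have sAB: "sqrt A * sqrt B > 0" using A0 B0 by simp
  have crf: "(r1 - r0) * (m1 - m0) * (cos s * sin s' - sin s * cos s') > 0"
  proof -
    have "sqrt A * sqrt B * ((r1 - r0) * (m1 - m0) * (cos s * sin s' - sin s * cos s')) > 0"
      using cr cross2_pt[OF A0 B0] by simp
    then show ?thesis using sAB zero_less_mult_pos by blast
  qed
  have m0r: "m0 = - r1"
  proof (rule ccontr)
    assume "m0 \<noteq> - r1"
    then have m: "m0 = r1" using m0c by auto
    have d1: "cos s - cos s' = r1 * (sin s - sin s')" using E1 m by (simp add: algebra_simps)
    have d2: "sin s - sin s' = - r1 * (cos s - cos s')" using E2 m by (simp add: algebra_simps)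
    have "(1 + r1^2) * (cos s - cos s') = 0" using d1 d2 by (simp add: algebra_simps power2_eq_square)
    moreover have "1 + r1^2 \<noteq> 0" by (smt (verit) zero_le_power2)
    ultimately have c: "cos s = cos s'" by simp
    then have "sin s = sin s'" using d2 by simp
    then have "cos s * sin s' - sin s * cos s' = 0" using c by simp
    then show False using crf by simp
  qed
  have p: "1 + r1^2 > 0" by (simp add: add_pos_nonneg)
  have C: "cos s' = ((1 - r1^2) * cos s - 2 * r1 * sin s) / (1 + r1^2)"
  proof -
    have "cos s' + r1 * sin s' = cos s - r1 * sin s" "sin s' - r1 * cos s' = sin s + r1 * cos s"
      using E1 E2 m0r by auto
    then have "(1 + r1^2) * cos s' = (1 - r1^2) * cos s - 2 * r1 * sin s"
    proof -
      have "(1 + r1^2) * cos s' = (cos s' + r1 * sin s') - r1 * (sin s' - r1 * cos s')"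
        by (simp add: algebra_simps power2_eq_square)
      also have "\<dots> = (cos s - r1 * sin s) - r1 * (sin s + r1 * cos s)" using E1 E2 m0r by simp
      also have "\<dots> = (1 - r1^2) * cos s - 2 * r1 * sin s" by (simp add: algebra_simps power2_eq_square)
      finally show ?thesis .
    qed
    then show ?thesis using p by (simp add: field_simps)
  qed
  have S: "sin s' = ((1 - r1^2) * sin s + 2 * r1 * cos s) / (1 + r1^2)"
  proof -
    have "cos s' + r1 * sin s' = cos s - r1 * sin s" "sin s' - r1 * cos s' = sin s + r1 * cos s"
      using E1 E2 m0r by auto
    then have "(1 + r1^2) * sin s' = (1 - r1^2) * sin s + 2 * r1 * cos s"
    proof -
      have "(1 + r1^2) * sin s' = (sin s' - r1 * cos s') + r1 * (cos s' + r1 * sin s')"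
        by (simp add: algebra_simps power2_eq_square)
      also have "\<dots> = (sin s + r1 * cos s) + r1 * (cos s - r1 * sin s)" using E1 E2 m0r by simp
      also have "\<dots> = (1 - r1^2) * sin s + 2 * r1 * cos s" by (simp add: algebra_simps power2_eq_square)
      finally show ?thesis .
    qed
    then show ?thesis using p by (simp add: field_simps)
  qed
  have fac: "cos s * sin s' - sin s * cos s' = 2 * r1 / (1 + r1^2)"
  proof -
    have num: "cos s * ((1 - r1^2) * sin s + 2 * r1 * cos s) - sin s * ((1 - r1^2) * cos s - 2 * r1 * sin s)
        = 2 * r1 * ((sin s)^2 + (cos s)^2)" by algebra
    have "cos s * sin s' - sin s * cos s' = (cos s * ((1 - r1^2) * sin s + 2 * r1 * cos s) - sin s * ((1 - r1^2) * cos s - 2 * r1 * sin s)) / (1 + r1^2)"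
    proof -
      have gen: "\<And>a b c e d::real. a * (b/d) - c * (e/d) = (a*b - c*e)/d" by (simp add: diff_divide_distrib)
      show ?thesis unfolding C S by (rule gen)
    qed
    then have "cos s * sin s' - sin s * cos s' = (2 * r1 * ((sin s)^2 + (cos s)^2)) / (1 + r1^2)"
      unfolding num .
    then show ?thesis by simp
  qed
  have r1p: "r1 > 0"
  proof (rule ccontr)
    assume "\<not> r1 > 0"
    then have r1n: "r1 < 0" using rr by (cases "r1 = 0") auto
    then have "r0 > 0" using rr by (simp add: mult_less_0_iff)
    moreover have "m0 > 0" using m0r r1n by simp
    moreover then have "m1 < 0" using mm by (simp add: mult_less_0_iff)
    ultimately have "(r1 - r0) * (m1 - m0) > 0" using r1n by (simp add: mult_neg_neg)
    moreover have "2 * r1 / (1 + r1^2) < 0" using r1n p by (simp add: divide_neg_pos)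
    ultimately have "(r1 - r0) * (m1 - m0) * (2 * r1 / (1 + r1^2)) < 0" using mult_pos_neg by blast
    then show False using crf fac by simp
  qed
  have "cos (s + 2 * arctan r1) = (cos s * (1 - r1^2) - sin s * (2 * r1)) / (1 + r1^2)"
    unfolding cos_add cos_2arctan sin_2arctan by (rule gen_div_diff)
  also have "\<dots> = cos s'" unfolding C by (simp add: algebra_simps)
  finally have "cos (s + 2 * arctan r1) = cos s'" .
  moreover have "sin (s + 2 * arctan r1) = (sin s * (1 - r1^2) + cos s * (2 * r1)) / (1 + r1^2)"
    unfolding sin_add cos_2arctan sin_2arctan by (rule gen_div_add)
  moreover have "\<dots> = sin s'" unfolding S by (simp add: algebra_simps)
  ultimately show ?thesis using r1p m0r by simp
qed

lemma funpow_mono_shift: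
  fixes F :: "real \<Rightarrow> real" and c :: real
  assumes mono: "\<And>x y. x < y \<Longrightarrow> F x < F y" and sh: "\<And>x m. F (x + real_of_int m * c) = F x + real_of_int m * c"
  shows "\<And>x y. x < y \<Longrightarrow> (F ^^ n) x < (F ^^ n) y" "\<And>x m. (F ^^ n) (x + real_of_int m * c) = (F ^^ n) x + real_of_int m * c"
proof -
  show "\<And>x y. x < y \<Longrightarrow> (F ^^ n) x < (F ^^ n) y"
    by (induction n) (auto intro: mono)
  show "\<And>x m. (F ^^ n) (x + real_of_int m * c) = (F ^^ n) x + real_of_int m * c"
    by (induction n) (auto simp: sh)
qed

lemma half_rotation:
  fixes F :: "real \<Rightarrow> real" and c s0 :: real and p :: int
  assumes mono: "\<And>x y. x < y \<Longrightarrow> F x < F y" and sh: "\<And>x m. F (x + real_of_int m * c) = F x + real_of_int m * c"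
    and per: "(F ^^ (n + n)) s0 = s0 + real_of_int (2 * p) * c"
  shows "(F ^^ n) s0 = s0 + real_of_int p * c"
proof -
  define G where "G = F ^^ n"
  have gm: "\<And>x y. x < y \<Longrightarrow> G x < G y" and gs: "\<And>x m. G (x + real_of_int m * c) = G x + real_of_int m * c"
    using funpow_mono_shift[OF mono sh] unfolding G_def by auto
  define z where "z = G s0"
  have Gz: "G z = s0 + 2 * real_of_int p * c" using per unfolding z_def G_def by (simp add: funpow_add)
  show ?thesis
  proof (rule ccontr)
    assume ne: "(F ^^ n) s0 \<noteq> s0 + real_of_int p * c"
    then have "z < s0 + real_of_int p * c \<or> z > s0 + real_of_int p * c" unfolding z_def G_def by auto
    then show False
    proof
      assume "z < s0 + real_of_int p * c"
      then have "G z < G (s0 + real_of_int p * c)" by (rule gm)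
      also have "\<dots> = z + real_of_int p * c" using gs unfolding z_def by simp
      finally have "G z < z + real_of_int p * c" .
      moreover have "2 * real_of_int p * c = real_of_int p * c + real_of_int p * c" by simp
      ultimately show False using Gz \<open>z < s0 + real_of_int p * c\<close> by linarith
    next
      assume "z > s0 + real_of_int p * c"
      then have "G z > G (s0 + real_of_int p * c)" by (rule gm)
      moreover have "G (s0 + real_of_int p * c) = z + real_of_int p * c" using gs unfolding z_def by simp
      moreover have "2 * real_of_int p * c = real_of_int p * c + real_of_int p * c" by simp
      ultimately show False using Gz \<open>z > s0 + real_of_int p * c\<close> by linarith
    qed
  qed
qed

lemma pt_tan:
  assumes "cos b \<noteq> 0"
  shows "cos x - tan b * sin x = cos (x + b) / cos b" "sin x + tan b * cos x = sin (x + b) / cos b"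
  using assms by (auto simp: tan_def cos_add sin_add field_simps)

lemma quad_convex:
  fixes a b c x l :: real
  assumes "a \<ge> 0" "0 \<le> l" "l \<le> 1"
  shows "a * (l * x)^2 + b * (l * x) + c \<le> l * (a * x^2 + b * x + c) + (1 - l) * c"
proof -
  have "l^2 \<le> l" using assms by (simp add: power2_eq_square mult_left_le_one_le)
  then have "a * x^2 * l^2 \<le> a * x^2 * l" using assms by (simp add: mult_left_mono)
  then show ?thesis by (simp add: algebra_simps power2_eq_square)
qed

lemma pt_tan_eq:
  assumes "cos b \<noteq> 0"
  shows "pt A B x (tan b) = Complex (sqrt A * (cos (x + b) / cos b)) (sqrt B * (sin (x + b) / cos b))"
  unfolding pt_def pt_tan[OF assms] ..

locale conf =
  fixes A B a2 b2 :: real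
  assumes A0: "A > 0" and B0: "B > 0" and Aa: "A < a2" and Bb: "B < b2"
begin

definition Q :: "real \<Rightarrow> real \<Rightarrow> real" where
  "Q s r = qa A B a2 b2 s * r^2 + qb A B a2 b2 s * r + qc A B a2 b2 s"

definition rpos :: "real \<Rightarrow> real" where
  "rpos s = (- qb A B a2 b2 s + sqrt ((qb A B a2 b2 s)^2 - 4 * qa A B a2 b2 s * qc A B a2 b2 s)) / (2 * qa A B a2 b2 s)"

definition Fm :: "real \<Rightarrow> real" where
  "Fm s = s + 2 * arctan (rpos s)"

lemma a20: "a2 > 0" "b2 > 0" using A0 B0 Aa Bb by auto

lemma qa0: "qa A B a2 b2 s > 0" using qa_pos A0 B0 a20 by auto
lemma qc0: "qc A B a2 b2 s < 0" using qc_neg A0 B0 Aa Bb by auto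

lemma Ev_pt: "(Re (pt A B s r))^2 / a2 + (Im (pt A B s r))^2 / b2 = Q s r + 1"
proof -
  have "(Re (pt A B s r))^2 / a2 + (Im (pt A B s r))^2 / b2 =
      A * (cos s - r * sin s)^2 / a2 + B * (sin s + r * cos s)^2 / b2"
    using A0 B0 by (simp add: pt_def power_mult_distrib)
  also have "\<dots> = (A / a2) * (cos s - r * sin s)^2 + (B / b2) * (sin s + r * cos s)^2" by simp
  also have "\<dots> = Q s r + 1"
    unfolding Q_def qa_def qb_def qc_def by (simp add: algebra_simps power2_eq_square)
  finally show ?thesis .
qed

lemma rpos_root: "Q s (rpos s) = 0" and rpos_pos: "rpos s > 0"
proof -
  define a where "a = qa A B a2 b2 s"
  define b where "b = qb A B a2 b2 s"
  define c where "c = qc A B a2 b2 s"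
  have a0: "a > 0" and c0: "c < 0" using qa0 qc0 unfolding a_def c_def by auto
  have dpos: "b^2 - 4 * a * c > b^2" using a0 c0 by (simp add: mult_pos_neg)
  then have d0: "b^2 - 4 * a * c \<ge> 0" by (smt (verit) zero_le_power2)
  define d where "d = sqrt (b^2 - 4 * a * c)"
  have dd: "d^2 = b^2 - 4 * a * c" unfolding d_def using d0 by simp
  have "d > \<bar>b\<bar>" unfolding d_def using dpos by (metis real_sqrt_abs real_sqrt_less_mono)
  then have "- b + d > 0" by linarith
  then show "rpos s > 0" unfolding rpos_def a_def[symmetric] b_def[symmetric] c_def[symmetric] d_def[symmetric]
    using a0 by simp
  have "a * ((- b + d) / (2 * a))^2 + b * ((- b + d) / (2 * a)) + c = (d^2 - (b^2 - 4 * a * c)) / (4 * a)"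
    using a0 by (simp add: field_simps power2_eq_square)
  also have "\<dots> = 0" using dd by simp
  finally show "Q s (rpos s) = 0" unfolding Q_def rpos_def a_def[symmetric] b_def[symmetric] c_def[symmetric] d_def[symmetric] .
qed

lemma rpos_unique: assumes "r > 0" "Q s r = 0" shows "r = rpos s"
proof (rule ccontr)
  assume "r \<noteq> rpos s"
  moreover have e1: "qa A B a2 b2 s * r^2 + qb A B a2 b2 s * r + qc A B a2 b2 s = 0" using assms(2) unfolding Q_def .
  moreover have e2: "qa A B a2 b2 s * (rpos s)^2 + qb A B a2 b2 s * (rpos s) + qc A B a2 b2 s = 0" using rpos_root[of s] unfolding Q_def .
  ultimately have "r * rpos s < 0" using quad_two_roots(1)[OF qa0[of s] qc0[of s] e1 e2] by blast
  then show False using assms rpos_pos[of s] by (simp add: mult_less_0_iff)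
qed

lemma rpos_pi: "rpos (s + pi) = rpos s"
  unfolding rpos_def qa_def qb_def qc_def by simp

lemma Fm_pi: "Fm (s + pi) = Fm s + pi"
  unfolding Fm_def rpos_pi by simp

lemma Fm_shift_nat: "Fm (s + real n * pi) = Fm s + real n * pi"
proof (induction n arbitrary: s)
  case 0 then show ?case by simp
next
  case (Suc n)
  have "Fm (s + real (Suc n) * pi) = Fm ((s + real n * pi) + pi)" by (simp add: algebra_simps)
  also have "\<dots> = Fm (s + real n * pi) + pi" by (rule Fm_pi)
  also have "\<dots> = Fm s + real (Suc n) * pi" using Suc by (simp add: algebra_simps)
  finally show ?case .
qed

lemma Fm_shift: "Fm (s + real_of_int m * pi) = Fm s + real_of_int m * pi"
proof (cases "m \<ge> 0")
  case True
  define n where "n = nat m"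
  have "m = int n" unfolding n_def using True by simp
  then show ?thesis using Fm_shift_nat by simp
next
  case False
  define n where "n = nat (- m)"
  have n: "m = - int n" unfolding n_def using False by simp
  have "Fm ((s - real n * pi) + real n * pi) = Fm (s - real n * pi) + real n * pi" by (rule Fm_shift_nat)
  then show ?thesis using n by simp
qed

lemma Fm_gt: "Fm s > s" and Fm_lt: "Fm s < s + pi"
proof -
  have "arctan (rpos s) > 0" using rpos_pos arctan_less_iff[of 0 "rpos s"] by simp
  then show "Fm s > s" unfolding Fm_def by simp
  have "arctan (rpos s) < pi / 2" by (rule arctan_ubound)
  then show "Fm s < s + pi" unfolding Fm_def by simp
qed

lemma Fm_mono_aux:
  assumes st: "s < t" and tu: "t < Fm s"
  shows "Fm s < Fm t"
proof -
  define u where "u = Fm s"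
  define r where "r = rpos s"
  define \<delta> where "\<delta> = arctan r"
  have r0: "r > 0" unfolding r_def by (rule rpos_pos)
  have d0: "0 < \<delta>" unfolding \<delta>_def using r0 arctan_less_iff[of 0 r] by simp
  have d1: "\<delta> < pi/2" unfolding \<delta>_def by (rule arctan_ubound)
  have u_def': "u = s + 2 * \<delta>" unfolding u_def Fm_def \<delta>_def r_def ..
  define \<alpha> where "\<alpha> = (u - t) / 2"
  have al0: "0 < \<alpha>" unfolding \<alpha>_def using tu u_def by simp
  have al1: "\<alpha> < \<delta>" unfolding \<alpha>_def using st u_def' by simp
  define k where "k = tan \<alpha>"
  have ak: "arctan k = \<alpha>" unfolding k_def using al0 al1 d1 by (intro arctan_tan) auto
  have k0: "k > 0" using ak al0 arctan_less_iff[of 0 k] by simp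
  have kr: "k < r" using ak al1 arctan_less_iff[of k r] unfolding \<delta>_def by simp
  have cd: "cos \<delta> \<noteq> 0" using d0 d1 by (simp add: cos_gt_zero_pi[THEN less_imp_neq, symmetric])
  have ca: "cos \<alpha> \<noteq> 0" using al0 al1 d1 by (simp add: cos_gt_zero_pi[THEN less_imp_neq, symmetric])
  have tr: "tan \<delta> = r" unfolding \<delta>_def by (rule tan_arctan)
  have X: "pt A B s r = pt A B u (- r)"
  proof -
    have cd': "cos (- \<delta>) \<noteq> 0" using cd by simp
    have e: "u + - \<delta> = s + \<delta>" using u_def' by simp
    have "pt A B s (tan \<delta>) = pt A B u (tan (- \<delta>))"
      unfolding pt_tan_eq[OF cd] pt_tan_eq[OF cd'] e by simp
    then show ?thesis using tr by simp
  qed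
  have Qu: "Q u (- r) = 0" using Ev_pt[of s r] Ev_pt[of u "- r"] X rpos_root[of s] unfolding r_def by simp
  have Z: "pt A B t k = pt A B u (- k)"
  proof -
    have ca': "cos (- \<alpha>) \<noteq> 0" using ca by simp
    have e: "u + - \<alpha> = t + \<alpha>" unfolding \<alpha>_def by (simp add: field_simps)
    have "pt A B t (tan \<alpha>) = pt A B u (tan (- \<alpha>))"
      unfolding pt_tan_eq[OF ca] pt_tan_eq[OF ca'] e by simp
    then show ?thesis unfolding k_def by simp
  qed
  define l where "l = k / r"
  have l0: "0 \<le> l" "l \<le> 1" unfolding l_def using k0 kr r0 by auto
  have l1: "l < 1" unfolding l_def using k0 kr r0 by auto
  have "Q u (l * (- r)) \<le> l * Q u (- r) + (1 - l) * qc A B a2 b2 u"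
    unfolding Q_def using quad_convex[OF less_imp_le[OF qa0] l0] .
  moreover have "l * (- r) = - k" unfolding l_def using r0 by simp
  moreover have "(1 - l) * qc A B a2 b2 u < 0" using l1 qc0 by (simp add: mult_pos_neg)
  ultimately have Qneg: "Q u (- k) < 0" using Qu by simp
  have Qt: "Q t k < 0" using Ev_pt[of t k] Ev_pt[of u "- k"] Z Qneg by simp
  have krt: "k < rpos t"
  proof (rule ccontr)
    assume "\<not> k < rpos t"
    then have le: "rpos t \<le> k" by simp
    define m where "m = rpos t / k"
    have m0: "0 \<le> m" "m \<le> 1" unfolding m_def using le k0 rpos_pos[of t] by auto
    have "Q t (m * k) \<le> m * Q t k + (1 - m) * qc A B a2 b2 t"
      unfolding Q_def using quad_convex[OF less_imp_le[OF qa0] m0] .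
    moreover have "m * k = rpos t" unfolding m_def using k0 by simp
    moreover have "m > 0" unfolding m_def using k0 rpos_pos[of t] by simp
    ultimately have "Q t (rpos t) < 0" using Qt qc0[of t] m0
      by (smt (verit) mult_pos_neg mult_nonneg_nonpos)
    then show False using rpos_root by simp
  qed
  then have "arctan k < arctan (rpos t)" by (simp add: arctan_less_iff)
  then have "u - t < 2 * arctan (rpos t)" using ak \<alpha>_def by simp
  then show ?thesis unfolding u_def Fm_def[of t] by simp
qed

lemma Fm_mono: assumes "s < t" shows "Fm s < Fm t"
proof (cases "t < Fm s")
  case True then show ?thesis using Fm_mono_aux assms by blast
next
  case False then show ?thesis using Fm_gt[of t] by simp
qed

end

lemma joach:
  fixes x y p q u w a2 b2 A B :: real
  assumes A0: "0 < A" and B0: "0 < B" and Aa: "A < a2" and Bb: "B < b2" and lam: "a2 - A = b2 - B"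
    and eP: "x^2 / a2 + y^2 / b2 = 1"
    and e0: "(x - p)^2 / a2 + (y - q)^2 / b2 = 1"
    and e2: "(x + u)^2 / a2 + (y + w)^2 / b2 = 1"
    and t1: "(x * q - y * p)^2 = B * p^2 + A * q^2"
    and t2: "(x * w - y * u)^2 = B * u^2 + A * w^2"
    and cr: "p * w - q * u > 0"
  shows "(p * w - q * u) / (sqrt (p^2 + q^2) * sqrt (u^2 + w^2)) =
    sqrt ((a2 - A) / (a2 * b2)) * ((x * q - y * p) / sqrt (p^2 + q^2) + (x * w - y * u) / sqrt (u^2 + w^2))"
proof -
  define L where "L = a2 - A"
  have L0: "L > 0" unfolding L_def using Aa by simp
  have a0: "a2 > 0" and b0: "b2 > 0" using A0 B0 Aa Bb by auto
  have ePm: "b2 * x^2 + a2 * y^2 = a2 * b2" using eP a0 b0 by (simp add: field_simps)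
  define n1 where "n1 = sqrt (p^2 + q^2)"
  define n2 where "n2 = sqrt (u^2 + w^2)"
  have v1: "p \<noteq> 0 \<or> q \<noteq> 0" using cr by auto
  have v2: "u \<noteq> 0 \<or> w \<noteq> 0" using cr by auto
  have n1p: "n1 > 0" unfolding n1_def using v1 by (auto intro: add_pos_nonneg add_nonneg_pos)
  have n2p: "n2 > 0" unfolding n2_def using v2 by (auto intro: add_pos_nonneg add_nonneg_pos)
  have n1s: "n1^2 = p^2 + q^2" unfolding n1_def by simp
  have n2s: "n2^2 = u^2 + w^2" unfolding n2_def by simp
  define j1 where "j1 = b2 * x * p + a2 * y * q"
  define j2 where "j2 = b2 * x * u + a2 * y * w"
  define c1 where "c1 = b2 * x * q - a2 * y * p"
  define c2 where "c2 = b2 * x * w - a2 * y * u"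
  define mm where "mm = (b2 * x)^2 + (a2 * y)^2"
  have lag: "\<And>vx vy. (b2 * x * vx + a2 * y * vy)^2 + a2 * b2 * (x * vy - y * vx)^2 = (b2 * vx^2 + a2 * vy^2) * (b2 * x^2 + a2 * y^2)"
    by algebra
  have j1s: "j1^2 = a2 * b2 * L * n1^2"
  proof -
    have "j1^2 + a2 * b2 * (x * q - y * p)^2 = (b2 * p^2 + a2 * q^2) * (a2 * b2)" unfolding j1_def using lag[of p q] ePm by simp
    then have "j1^2 = a2 * b2 * ((b2 - B) * p^2 + (a2 - A) * q^2)" using t1 by (simp add: algebra_simps)
    moreover have "b2 - B = L" "a2 - A = L" using lam unfolding L_def by auto
    ultimately show ?thesis unfolding n1s by (simp add: algebra_simps)
  qed
  have j2s: "j2^2 = a2 * b2 * L * n2^2"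
  proof -
    have "j2^2 + a2 * b2 * (x * w - y * u)^2 = (b2 * u^2 + a2 * w^2) * (a2 * b2)" unfolding j2_def using lag[of u w] ePm by simp
    then have "j2^2 = a2 * b2 * ((b2 - B) * u^2 + (a2 - A) * w^2)" using t2 by (simp add: algebra_simps)
    moreover have "b2 - B = L" "a2 - A = L" using lam unfolding L_def by auto
    ultimately show ?thesis unfolding n2s by (simp add: algebra_simps)
  qed
  have quadpos: "\<And>vx vy. vx \<noteq> 0 \<or> vy \<noteq> 0 \<Longrightarrow> b2 * vx^2 + a2 * vy^2 > 0"
    using a0 b0 by (auto intro: add_pos_nonneg add_nonneg_pos)
  have j2n: "j2 < 0"
  proof -
    have "b2 * (x + u)^2 + a2 * (y + w)^2 = a2 * b2" using e2 a0 b0 by (simp add: field_simps)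
    then have "2 * j2 + (b2 * u^2 + a2 * w^2) = 0" unfolding j2_def using ePm by (simp add: algebra_simps power2_eq_square)
    then show ?thesis using quadpos[OF v2] by simp
  qed
  have j1p: "j1 > 0"
  proof -
    have "b2 * (x - p)^2 + a2 * (y - q)^2 = a2 * b2" using e0 a0 b0 by (simp add: field_simps)
    then have "- 2 * j1 + (b2 * p^2 + a2 * q^2) = 0" unfolding j1_def using ePm by (simp add: algebra_simps power2_eq_square)
    then show ?thesis using quadpos[OF v1] by simp
  qed
  define M where "M = sqrt (a2 * b2 * L)"
  have M0: "M > 0" unfolding M_def using a0 b0 L0 by simp
  have Ms: "M^2 = a2 * b2 * L" unfolding M_def using a0 b0 L0 by simp
  have j1e: "j1 = M * n1"
  proof -
    have "j1^2 = (M * n1)^2" using j1s Ms by (simp add: power_mult_distrib)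
    then show ?thesis using j1p M0 n1p by (simp add: power2_eq_iff_nonneg)
  qed
  have j2e: "j2 = - M * n2"
  proof -
    have "(- j2)^2 = (M * n2)^2" using j2s Ms by (simp add: power_mult_distrib)
    moreover have "- j2 \<ge> 0" "M * n2 \<ge> 0" using j2n M0 n2p by auto
    ultimately have "- j2 = M * n2" using power2_eq_iff_nonneg by blast
    then show ?thesis by simp
  qed
  have lag1: "mm * n1^2 = j1^2 + c1^2" unfolding mm_def j1_def c1_def n1s by algebra
  have lag2: "mm * n2^2 = j2^2 + c2^2" unfolding mm_def j2_def c2_def n2s by algebra
  have mm0: "mm > 0"
  proof -
    have "x \<noteq> 0 \<or> y \<noteq> 0" using eP by auto
    then show ?thesis unfolding mm_def using a0 b0 by (auto intro: add_pos_nonneg add_nonneg_pos)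
  qed
  have c1s: "(c1 / n1)^2 = mm - M^2"
  proof -
    have "c1^2 = (mm - M^2) * n1^2" using lag1 j1e by (simp add: algebra_simps power_mult_distrib)
    then show ?thesis using n1p by (simp add: power_divide)
  qed
  have c2s: "(c2 / n2)^2 = mm - M^2"
  proof -
    have "c2^2 = (mm - M^2) * n2^2" using lag2 j2e by (simp add: algebra_simps power_mult_distrib)
    then show ?thesis using n2p by (simp add: power_divide)
  qed
  have crm: "mm * (p * w - q * u) = j1 * c2 - c1 * j2" unfolding mm_def j1_def j2_def c1_def c2_def by algebra
  have "mm * (p * w - q * u) = M * n1 * n2 * (c1 / n1 + c2 / n2)"
    unfolding crm j1e j2e using n1p n2p by (simp add: field_simps)
  moreover have "mm * (p * w - q * u) > 0" using mm0 cr by simp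
  ultimately have "M * n1 * n2 * (c1 / n1 + c2 / n2) > 0" by simp
  moreover have "M * n1 * n2 > 0" using M0 n1p n2p by simp
  ultimately have bpos: "c1 / n1 + c2 / n2 > 0" using zero_less_mult_pos by blast
  have beq: "c1 / n1 = c2 / n2"
  proof -
    have "(c1 / n1)^2 = (c2 / n2)^2" using c1s c2s by simp
    then have "c1 / n1 = c2 / n2 \<or> c1 / n1 = - (c2 / n2)" by (simp add: power2_eq_iff)
    then show ?thesis using bpos by auto
  qed
  define \<beta> where "\<beta> = c1 / n1"
  have PM: "b2 * x * x + a2 * y * y = a2 * b2" using ePm by (simp add: power2_eq_square)
  define cp where "cp = x * (a2 * y) - y * (b2 * x)"
  have id1: "mm * (x * q - y * p) = j1 * cp + c1 * (a2 * b2)"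
    unfolding mm_def j1_def c1_def cp_def using PM by algebra
  have id2: "mm * (x * w - y * u) = j2 * cp + c2 * (a2 * b2)"
    unfolding mm_def j2_def c2_def cp_def using PM by algebra
  have S: "mm * ((x * q - y * p) / n1 + (x * w - y * u) / n2) = 2 * \<beta> * (a2 * b2)"
  proof -
    have "mm * ((x * q - y * p) / n1 + (x * w - y * u) / n2) = (mm * (x * q - y * p)) / n1 + (mm * (x * w - y * u)) / n2"
      by (simp add: field_simps)
    also have "\<dots> = (j1 / n1) * cp + (c1 / n1) * (a2 * b2) + ((j2 / n2) * cp + (c2 / n2) * (a2 * b2))"
      unfolding id1 id2 by (simp add: add_divide_distrib)
    also have "\<dots> = 2 * \<beta> * (a2 * b2)" unfolding j1e j2e \<beta>_def using beq n1p n2p by simp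
    finally show ?thesis .
  qed
  have C: "mm * ((p * w - q * u) / (n1 * n2)) = 2 * M * \<beta>"
  proof -
    have "mm * ((p * w - q * u) / (n1 * n2)) = M * n1 * n2 * (c1 / n1 + c2 / n2) / (n1 * n2)"
      using \<open>mm * (p * w - q * u) = M * n1 * n2 * (c1 / n1 + c2 / n2)\<close> by simp
    also have "\<dots> = M * (c1 / n1 + c2 / n2)" using n1p n2p by simp
    also have "\<dots> = 2 * M * \<beta>" unfolding \<beta>_def using beq by simp
    finally show ?thesis .
  qed
  have K: "sqrt ((a2 - A) / (a2 * b2)) = M / (a2 * b2)"
  proof -
    have "M / (a2 * b2) = sqrt (a2 * b2 * L) / sqrt ((a2 * b2)^2)" unfolding M_def using a0 b0 by simp
    also have "\<dots> = sqrt (a2 * b2 * L / (a2 * b2)^2)" by (simp add: real_sqrt_divide)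
    also have "a2 * b2 * L / (a2 * b2)^2 = L / (a2 * b2)" using a0 b0 by (simp add: power2_eq_square)
    finally show ?thesis unfolding L_def by simp
  qed
  have nz: "mm \<noteq> 0" using mm0 by simp
  define Sx where "Sx = (x * q - y * p) / n1 + (x * w - y * u) / n2"
  have "mm * (M / (a2 * b2) * Sx) = M / (a2 * b2) * (mm * Sx)" by (simp only: ac_simps)
  also have "\<dots> = M / (a2 * b2) * (2 * \<beta> * (a2 * b2))" using S unfolding Sx_def by simp
  also have "\<dots> = 2 * M * \<beta>" using a0 b0 by simp
  finally have "mm * ((p * w - q * u) / (n1 * n2)) = mm * (M / (a2 * b2) * ((x * q - y * p) / n1 + (x * w - y * u) / n2))"
    using C unfolding Sx_def by simp
  then have "(p * w - q * u) / (n1 * n2) = M / (a2 * b2) * ((x * q - y * p) / n1 + (x * w - y * u) / n2)"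
    by (rule iffD1[OF mult_left_cancel[OF nz]])
  then show ?thesis unfolding K n1_def[symmetric] n2_def[symmetric] .
qed

lemma sin_ext_angle:
  fixes v1 v2 :: complex
  assumes cr: "cross2 v1 v2 > 0"
  shows "sin (vec_angle v1 v2) = cross2 v1 v2 / (norm v1 * norm v2)"
proof -
  define p where "p = Re v1"
  define q where "q = Im v1"
  define u where "u = Re v2"
  define w where "w = Im v2"
  have crp: "p * w - q * u > 0" using cr unfolding cross2_def p_def q_def u_def w_def by simp
  have n1: "norm v1 = sqrt (p^2 + q^2)" unfolding p_def q_def cmod_def by simp
  have n2: "norm v2 = sqrt (u^2 + w^2)" unfolding u_def w_def cmod_def by simp
  have v1: "v1 \<noteq> 0" and v2: "v2 \<noteq> 0" using cr unfolding cross2_def by auto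
  have N: "norm v1 * norm v2 > 0" using v1 v2 by simp
  have lag: "(p * u + q * w)^2 + (p * w - q * u)^2 = (norm v1 * norm v2)^2"
    unfolding n1 n2 by (simp add: power_mult_distrib) algebra
  define c where "c = (p * u + q * w) / (norm v1 * norm v2)"
  have "c^2 + ((p * w - q * u) / (norm v1 * norm v2))^2 = (p * u + q * w)^2 / (norm v1 * norm v2)^2 + (p * w - q * u)^2 / (norm v1 * norm v2)^2"
    unfolding c_def power_divide ..
  also have "\<dots> = ((p * u + q * w)^2 + (p * w - q * u)^2) / (norm v1 * norm v2)^2"
    by (rule add_divide_distrib[symmetric])
  also have "\<dots> = 1" using lag N v1 v2 by simp
  finally have "c^2 + ((p * w - q * u) / (norm v1 * norm v2))^2 = 1" .
  then have c1: "1 - c^2 = ((p * w - q * u) / (norm v1 * norm v2))^2" by simp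
  then have "c^2 \<le> 1" by (smt (verit) zero_le_power2)
  then have "\<bar>c\<bar> \<le> 1" using abs_le_square_iff[of c 1] by simp
  then have cb: "-1 \<le> c" "c \<le> 1" by auto
  have "sin (arccos c) = sqrt (1 - c^2)" using sin_arccos cb by simp
  also have "\<dots> = (p * w - q * u) / (norm v1 * norm v2)" unfolding c1 using crp N by simp
  finally show ?thesis unfolding vec_angle_def c_def p_def q_def u_def w_def inner_complex_def cross2_def by simp
qed

lemma telescope:
  fixes W :: "int \<Rightarrow> real"
  shows "(\<Sum>i=1..int n. (-1) ^ nat i * (W (i - 1) + W i)) = (-1) ^ n * W (int n) - W 0"
proof (induction n)
  case 0 then show ?case by simp
next
  case (Suc n)
  have "{1..int (Suc n)} = insert (int n + 1) {1..int n}" by auto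
  then have "(\<Sum>i=1..int (Suc n). (-1) ^ nat i * (W (i - 1) + W i)) =
      (-1) ^ nat (int n + 1) * (W (int n + 1 - 1) + W (int n + 1)) + (\<Sum>i=1..int n. (-1) ^ nat i * (W (i - 1) + W i))"
    by simp
  also have "\<dots> = (-1) ^ Suc n * (W (int n) + W (int n + 1)) + ((-1) ^ n * W (int n) - W 0)"
    using Suc by (simp add: nat_add_distrib)
  also have "\<dots> = (-1) ^ Suc n * W (int (Suc n)) - W 0" by (simp add: algebra_simps)
  finally show ?case .
qed

lemma cross_pt_tangent:
  assumes A0: "A > 0" and B0: "B > 0"
  shows "(Re (pt A B s t) * Im (pt A B s r' - pt A B s r) - Im (pt A B s t) * Re (pt A B s r' - pt A B s r))^2
     = B * (Re (pt A B s r' - pt A B s r))^2 + A * (Im (pt A B s r' - pt A B s r))^2"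
proof -
  have sA: "(sqrt A)^2 = A" and sB: "(sqrt B)^2 = B" using A0 B0 by auto
  have "Re (pt A B s t) * Im (pt A B s r' - pt A B s r) - Im (pt A B s t) * Re (pt A B s r' - pt A B s r)
     = sqrt A * sqrt B * (r' - r) * ((sin s)^2 + (cos s)^2)"
    unfolding pt_def minus_complex.sel complex.sel by algebra
  then have "(Re (pt A B s t) * Im (pt A B s r' - pt A B s r) - Im (pt A B s t) * Re (pt A B s r' - pt A B s r))^2
     = A * B * (r' - r)^2" using sA sB by (simp add: power_mult_distrib)
  moreover have "B * (Re (pt A B s r' - pt A B s r))^2 + A * (Im (pt A B s r' - pt A B s r))^2
     = A * B * (r' - r)^2 * ((sin s)^2 + (cos s)^2)"
  proof -
    have "B * (Re (pt A B s r' - pt A B s r))^2 + A * (Im (pt A B s r' - pt A B s r))^2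
      = B * (sqrt A)^2 * ((r' - r) * sin s)^2 + A * (sqrt B)^2 * ((r' - r) * cos s)^2"
      unfolding pt_def minus_complex.sel complex.sel by algebra
    also have "\<dots> = A * B * (r' - r)^2 * ((sin s)^2 + (cos s)^2)" unfolding sA sB by algebra
    finally show ?thesis .
  qed
  ultimately show ?thesis by simp
qed

lemma cos_sin_eq_shift:
  assumes "cos a = cos b" "sin a = sin b"
  shows "\<exists>m::int. a = b + real_of_int m * (2 * pi)"
proof -
  have "cos (a - b) = 1" unfolding cos_diff assms using sin_cos_squared_add[of b] by (simp add: power2_eq_square)
  then have "\<exists>n::int. a - b = real_of_int n * 2 * pi" using cos_one_2pi_int by blast
  then obtain n :: int where "a - b = real_of_int n * 2 * pi" by blast
  then show ?thesis by (intro exI[of _ n]) simp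
qed

lemma sincos_int_pi: "(sin (x + real_of_int m * pi))^2 = (sin x)^2 \<and> (cos (x + real_of_int m * pi))^2 = (cos x)^2"
proof -
  have s0: "sin (real_of_int m * pi) = 0" using sin_times_pi_eq_0[of "real_of_int m"] by simp
  then have c1: "(cos (real_of_int m * pi))^2 = 1" using sin_cos_squared_add[of "real_of_int m * pi"] by simp
  show ?thesis unfolding sin_add cos_add s0 using c1 by (simp add: power_mult_distrib)
qed

lemma dir_eq:
  fixes al be a b :: real
  assumes "al > 0" "be > 0" "al * sin a = be * sin b" "al * cos a = be * cos b"
  shows "cos a = cos b \<and> sin a = sin b"
proof -
  have "(al * sin a)^2 + (al * cos a)^2 = (be * sin b)^2 + (be * cos b)^2" using assms by simp
  then have "al^2 * ((sin a)^2 + (cos a)^2) = be^2 * ((sin b)^2 + (cos b)^2)"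
    by (simp only: power_mult_distrib distrib_left)
  then have "al^2 = be^2" by simp
  moreover have "al \<ge> 0" "be \<ge> 0" using assms by auto
  ultimately have "al = be" using power2_eq_iff_nonneg by blast
  then show ?thesis using assms by simp
qed

context conf
begin

definition G :: "real \<Rightarrow> real" where
  "G t = sqrt A * sqrt B / sqrt (A * (sin t)^2 + B * (cos t)^2)"

lemma W_G:
  assumes "r1 > r0"
  shows "cross2 (pt A B t r0) (pt A B t r1 - pt A B t r0) / norm (pt A B t r1 - pt A B t r0) = G t"
proof -
  have sA: "(sqrt A)^2 = A" and sB: "(sqrt B)^2 = B" using A0 B0 by auto
  have c: "cross2 (pt A B t r0) (pt A B t r1 - pt A B t r0) = sqrt A * sqrt B * (r1 - r0) * ((sin t)^2 + (cos t)^2)"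
    unfolding cross2_def pt_def minus_complex.sel complex.sel by algebra
  have "(norm (pt A B t r1 - pt A B t r0))^2 = (Re (pt A B t r1 - pt A B t r0))^2 + (Im (pt A B t r1 - pt A B t r0))^2"
    unfolding cmod_def by simp
  also have "\<dots> = (sqrt A)^2 * ((r1 - r0) * sin t)^2 + (sqrt B)^2 * ((r1 - r0) * cos t)^2"
    unfolding pt_def minus_complex.sel complex.sel by algebra
  also have "\<dots> = (r1 - r0)^2 * (A * (sin t)^2 + B * (cos t)^2)" unfolding sA sB by algebra
  finally have "norm (pt A B t r1 - pt A B t r0) = sqrt ((r1 - r0)^2 * (A * (sin t)^2 + B * (cos t)^2))"
    by (metis norm_ge_zero real_sqrt_unique)
  also have "\<dots> = (r1 - r0) * sqrt (A * (sin t)^2 + B * (cos t)^2)" using assms by (simp add: real_sqrt_mult)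
  finally have n: "norm (pt A B t r1 - pt A B t r0) = (r1 - r0) * sqrt (A * (sin t)^2 + B * (cos t)^2)" .
  show ?thesis unfolding c n G_def using assms by simp
qed

lemma G_pi: "G (t + real_of_int m * pi) = G t"
  unfolding G_def using sincos_int_pi[of t m] by simp

lemma G_cs: "cos a = cos b \<Longrightarrow> sin a = sin b \<Longrightarrow> G a = G b"
  unfolding G_def by simp

lemma Fm_cs:
  assumes "cos a = cos b" "sin a = sin b"
  shows "cos (Fm a) = cos (Fm b) \<and> sin (Fm a) = sin (Fm b)"
proof -
  have "rpos a = rpos b" unfolding rpos_def qa_def qb_def qc_def using assms by simp
  then show ?thesis unfolding Fm_def cos_add sin_add using assms by simp
qed

end

theorem std_main:
  fixes f sc se :: real and N :: nat and P :: "int \<Rightarrow> complex"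
  assumes f0: "0 \<le> f" and fsc: "f < sc" and scse: "sc < se"
    and onE: "\<And>j. P j \<in> ellipse (of_real f) (- of_real f) se"
    and tl: "\<And>j. tangent_line (ellipse (of_real f) (- of_real f) sc) (P j) (P (j + 1))"
    and turn: "\<And>j. cross2 (P j - P (j - 1)) (P (j + 1) - P j) > 0"
    and per: "\<And>j. P (j + int N) = P j"
  shows "(even N \<longrightarrow> (\<Sum>i=1..int N. (-1) ^ nat i * sin (ext_angle P i)) = 0) \<and>
         (4 dvd N \<longrightarrow> (\<Sum>i=1..int N div 2. (-1) ^ nat i * sin (ext_angle P i)) = 0)"
proof -
  define A where "A = sc^2"
  define B where "B = sc^2 - f^2"
  define a2 where "a2 = se^2"
  define b2 where "b2 = se^2 - f^2"
  have sc0: "sc > 0" using f0 fsc by linarith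
  have A0: "A > 0" unfolding A_def using sc0 by simp
  have "f^2 < sc^2" using f0 fsc by (simp add: power_strict_mono)
  then have B0: "B > 0" unfolding B_def by simp
  have "sc^2 < se^2" using sc0 scse by (simp add: power_strict_mono)
  then have Aa: "A < a2" and Bb: "B < b2" unfolding A_def a2_def B_def b2_def by auto
  have lam: "a2 - A = b2 - B" unfolding A_def a2_def B_def b2_def by simp
  interpret conf A B a2 b2 by unfold_locales (rule A0 B0 Aa Bb)+
  have fse: "f < se" using fsc scse by simp
  have memb: "\<And>z. z \<in> ellipse (of_real f) (- of_real f) sc \<longleftrightarrow> (Re z)^2 / A + (Im z)^2 / B = 1"
    unfolding A_def B_def using ellipse_std_iff[OF f0 fsc] by simp
  have eE: "\<And>j. (Re (P j))^2 / a2 + (Im (P j))^2 / b2 = 1"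
    using onE ellipse_std_iff[OF f0 fse] unfolding a2_def b2_def by simp
  have "\<forall>j. \<exists>s r r'. P j = pt A B s r \<and> P (j + 1) = pt A B s r' \<and> r \<noteq> r'"
    using tangent_param[OF A0 B0 memb tl] by blast
  then obtain s r0 r1 where par1: "\<And>j. P j = pt A B (s j) (r0 j)" and par2: "\<And>j. P (j + 1) = pt A B (s j) (r1 j)"
    and par3: "\<And>j. r0 j \<noteq> r1 j"
    by metis
  have Q0: "\<And>j. Q (s j) (r0 j) = 0" using eE Ev_pt par1 by (metis add_cancel_right_left)
  have Q1: "\<And>j. Q (s j) (r1 j) = 0" using eE Ev_pt par2 by (metis add_cancel_right_left)
  have V: "r1 j > 0 \<and> r0 (j + 1) = - r1 j \<and> cos (s (j + 1)) = cos (Fm (s j)) \<and> sin (s (j + 1)) = sin (Fm (s j))" for j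
  proof -
    have X1: "pt A B (s j) (r1 j) = pt A B (s (j + 1)) (r0 (j + 1))" using par2[of j] par1[of "j + 1"] by simp
    have c0: "cross2 (P (j + 1) - P j) (P (j + 1 + 1) - P (j + 1)) > 0" using turn[of "j + 1"] by simp
    have "cross2 (P (j + 1) - P j) (P (j + 1 + 1) - P (j + 1)) =
        cross2 (pt A B (s j) (r1 j) - pt A B (s j) (r0 j)) (P (j + 1 + 1) - P (j + 1))"
      using par2[of j] par1[of j] by simp
    also have "\<dots> = cross2 (pt A B (s j) (r1 j) - pt A B (s j) (r0 j)) (pt A B (s (j + 1)) (r1 (j + 1)) - pt A B (s (j + 1)) (r0 (j + 1)))"
      using par1[of "j + 1"] par2[of "j + 1"] by simp
    finally have cr: "cross2 (pt A B (s j) (r1 j) - pt A B (s j) (r0 j)) (pt A B (s (j + 1)) (r1 (j + 1)) - pt A B (s (j + 1)) (r0 (j + 1))) > 0"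
      using c0 by simp
    have v: "r1 j > 0 \<and> r0 (j + 1) = - r1 j \<and> cos (s (j + 1)) = cos (s j + 2 * arctan (r1 j)) \<and> sin (s (j + 1)) = sin (s j + 2 * arctan (r1 j))"
      using vertex[OF A0 B0 Aa Bb X1 Q0[of j, unfolded Q_def] Q1[of j, unfolded Q_def] Q0[of "j + 1", unfolded Q_def]
          Q1[of "j + 1", unfolded Q_def] par3[of j] par3[of "j + 1"] cr] .
    then have "r1 j = rpos (s j)" using rpos_unique Q1 by blast
    then show ?thesis using v unfolding Fm_def by simp
  qed
  define K where "K = sqrt ((a2 - A) / (a2 * b2))"
  define W where "W j = cross2 (P j) (P (j + 1) - P j) / norm (P (j + 1) - P j)" for j
  have loc: "sin (ext_angle P i) = K * (W (i - 1) + W i)" for i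
  proof -
    define v1 where "v1 = P i - P (i - 1)"
    define v2 where "v2 = P (i + 1) - P i"
    have cr: "cross2 v1 v2 > 0" unfolding v1_def v2_def by (rule turn)
    have sn: "sin (ext_angle P i) = cross2 v1 v2 / (norm v1 * norm v2)"
      unfolding ext_angle_def v1_def[symmetric] v2_def[symmetric] by (rule sin_ext_angle[OF cr])
    have n1: "norm v1 = sqrt ((Re v1)^2 + (Im v1)^2)" unfolding cmod_def ..
    have n2: "norm v2 = sqrt ((Re v2)^2 + (Im v2)^2)" unfolding cmod_def ..
    have ePi: "(Re (P i))^2 / a2 + (Im (P i))^2 / b2 = 1" by (rule eE)
    have e0: "(Re (P i) - Re v1)^2 / a2 + (Im (P i) - Im v1)^2 / b2 = 1" unfolding v1_def using eE[of "i - 1"] by simp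
    have e2: "(Re (P i) + Re v2)^2 / a2 + (Im (P i) + Im v2)^2 / b2 = 1" unfolding v2_def using eE[of "i + 1"] by simp
    have Pi1: "P i = pt A B (s (i - 1)) (r1 (i - 1))" using par2[of "i - 1"] by simp
    have Pim: "P (i - 1) = pt A B (s (i - 1)) (r0 (i - 1))" by (rule par1)
    have t1: "(Re (P i) * Im v1 - Im (P i) * Re v1)^2 = B * (Re v1)^2 + A * (Im v1)^2"
      unfolding v1_def Pim using cross_pt_tangent[OF A0 B0, of "s (i - 1)" "r1 (i - 1)" "r1 (i - 1)" "r0 (i - 1)"] Pi1 by simp
    have t2: "(Re (P i) * Im v2 - Im (P i) * Re v2)^2 = B * (Re v2)^2 + A * (Im v2)^2"
      unfolding v2_def par2[of i] using cross_pt_tangent[OF A0 B0, of "s i" "r0 i" "r1 i" "r0 i"] par1[of i] by simp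
    have crr: "Re v1 * Im v2 - Im v1 * Re v2 > 0" using cr unfolding cross2_def .
    have J: "(Re v1 * Im v2 - Im v1 * Re v2) / (sqrt ((Re v1)^2 + (Im v1)^2) * sqrt ((Re v2)^2 + (Im v2)^2)) =
      K * ((Re (P i) * Im v1 - Im (P i) * Re v1) / sqrt ((Re v1)^2 + (Im v1)^2) +
           (Re (P i) * Im v2 - Im (P i) * Re v2) / sqrt ((Re v2)^2 + (Im v2)^2))"
      unfolding K_def by (rule joach[OF A0 B0 Aa Bb lam ePi e0 e2 t1 t2 crr])
    have w1: "W (i - 1) = (Re (P i) * Im v1 - Im (P i) * Re v1) / norm v1"
    proof -
      have "W (i - 1) = cross2 (P (i - 1)) v1 / norm v1" unfolding W_def v1_def by simp
      moreover have "cross2 (P (i - 1)) v1 = Re (P i) * Im v1 - Im (P i) * Re v1"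
        unfolding cross2_def v1_def by (simp add: algebra_simps)
      ultimately show ?thesis by simp
    qed
    have w2: "W i = (Re (P i) * Im v2 - Im (P i) * Re v2) / norm v2"
      unfolding W_def v2_def cross2_def by simp
    show ?thesis unfolding sn w1 w2 n1 n2 using J unfolding cross2_def by simp
  qed
  have sumeq: "(\<Sum>i=1..int n. (-1) ^ nat i * sin (ext_angle P i)) = K * ((-1) ^ n * W (int n) - W 0)" for n
  proof -
    have "(\<Sum>i=1..int n. (-1) ^ nat i * sin (ext_angle P i)) = (\<Sum>i=1..int n. K * ((-1) ^ nat i * (W (i - 1) + W i)))"
      unfolding loc by (simp add: algebra_simps)
    also have "\<dots> = K * (\<Sum>i=1..int n. (-1) ^ nat i * (W (i - 1) + W i))" by (simp add: sum_distrib_left)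
    also have "\<dots> = K * ((-1) ^ n * W (int n) - W 0)" unfolding telescope ..
    finally show ?thesis .
  qed
  have WN: "W (int N) = W 0"
  proof -
    have "P (int N) = P 0" using per[of 0] by simp
    moreover have "P (int N + 1) = P (0 + 1)" using per[of 1] by (simp add: add.commute)
    ultimately show ?thesis unfolding W_def by simp
  qed
  have part1: "even N \<longrightarrow> (\<Sum>i=1..int N. (-1) ^ nat i * sin (ext_angle P i)) = 0"
    using sumeq[of N] WN by simp
  have WG: "W j = G (s j)" for j
  proof -
    have "r0 j = - r1 (j - 1)" using V[of "j - 1"] by simp
    moreover have "r1 (j - 1) > 0" "r1 j > 0" using V[of "j - 1"] V[of j] by auto
    ultimately have "r1 j > r0 j" by simp
    then show ?thesis unfolding W_def par1[of j] par2[of j] by (rule W_G)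
  qed
  define sh where "sh k = (Fm ^^ k) (s 0)" for k
  have lift: "cos (sh k) = cos (s (int k)) \<and> sin (sh k) = sin (s (int k))" for k
  proof (induction k)
    case 0 then show ?case unfolding sh_def by simp
  next
    case (Suc k)
    have "cos (sh (Suc k)) = cos (Fm (sh k)) \<and> sin (sh (Suc k)) = sin (Fm (sh k))" unfolding sh_def by simp
    moreover have "cos (Fm (sh k)) = cos (Fm (s (int k))) \<and> sin (Fm (sh k)) = sin (Fm (s (int k)))"
      using Fm_cs Suc by blast
    moreover have "cos (s (1 + int k)) = cos (Fm (s (int k))) \<and> sin (s (1 + int k)) = sin (Fm (s (int k)))"
      using V[of "int k"] by (simp add: add.commute)
    ultimately show ?case by simp
  qed
  have perS: "cos (s (int N)) = cos (s 0) \<and> sin (s (int N)) = sin (s 0)"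
  proof -
    have a: "P (int N) = P 0" using per[of 0] by simp
    have b: "P (int N + 1) = P (0 + 1)" using per[of 1] by (simp add: add.commute)
    have "P (int N + 1) - P (int N) = P (0 + 1) - P 0" using a b by simp
    then have "pt A B (s (int N)) (r1 (int N)) - pt A B (s (int N)) (r0 (int N)) = pt A B (s 0) (r1 0) - pt A B (s 0) (r0 0)"
      using par1 par2 by metis
    then have re: "sqrt A * ((r1 (int N) - r0 (int N)) * sin (s (int N))) = sqrt A * ((r1 0 - r0 0) * sin (s 0))"
      and im: "sqrt B * ((r1 (int N) - r0 (int N)) * cos (s (int N))) = sqrt B * ((r1 0 - r0 0) * cos (s 0))"
      unfolding pt_def complex_eq_iff by (simp_all add: algebra_simps)
    have g: "r1 j > r0 j" for j
    proof -
      have "r0 j = - r1 (j - 1)" using V[of "j - 1"] by simp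
      moreover have "r1 (j - 1) > 0" "r1 j > 0" using V[of "j - 1"] V[of j] by auto
      ultimately show ?thesis by simp
    qed
    show ?thesis
      apply (rule dir_eq[of "r1 (int N) - r0 (int N)" "r1 0 - r0 0"])
      using g re im A0 B0 by auto
  qed
  have part2: "4 dvd N \<longrightarrow> (\<Sum>i=1..int N div 2. (-1) ^ nat i * sin (ext_angle P i)) = 0"
  proof
    assume d4: "4 dvd N"
    define n where "n = N div 2"
    have Nn: "N = n + n" unfolding n_def using d4 by presburger
    have ne: "even n" unfolding n_def using d4 by presburger
    have idiv: "int N div 2 = int n" unfolding n_def by simp
    have "cos (sh N) = cos (s 0) \<and> sin (sh N) = sin (s 0)" using lift[of N] perS by simp
    then obtain m :: int where m: "sh N = s 0 + real_of_int m * (2 * pi)" using cos_sin_eq_shift by blast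
    have "(Fm ^^ (n + n)) (s 0) = s 0 + real_of_int (2 * m) * pi" using m Nn unfolding sh_def by simp
    then have "(Fm ^^ n) (s 0) = s 0 + real_of_int m * pi"
      using half_rotation[of Fm pi n "s 0" m] Fm_mono Fm_shift by blast
    then have "G (sh n) = G (s 0)" unfolding sh_def using G_pi by simp
    moreover have "G (sh n) = G (s (int n))" using lift[of n] G_cs by blast
    ultimately have "W (int n) = W 0" using WG by simp
    then show "(\<Sum>i=1..int N div 2. (-1) ^ nat i * sin (ext_angle P i)) = 0"
      unfolding idiv sumeq using ne by simp
  qed
  show ?thesis using part1 part2 by blast
qed

lemma on_line_map:
  fixes Oc \<omega> a b x :: complex
  assumes "\<omega> \<noteq> 0"
  shows "on_line (Oc + \<omega> * a) (Oc + \<omega> * b) (Oc + \<omega> * x) \<longleftrightarrow> on_line a b x"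
proof -
  have "(Oc + \<omega> * x = Oc + \<omega> * a + of_real t * (Oc + \<omega> * b - (Oc + \<omega> * a))) \<longleftrightarrow> (x = a + of_real t * (b - a))" for t
  proof -
    have "Oc + \<omega> * a + of_real t * (Oc + \<omega> * b - (Oc + \<omega> * a)) = Oc + \<omega> * (a + of_real t * (b - a))"
      by (simp add: algebra_simps)
    then show ?thesis using assms by simp
  qed
  then show ?thesis unfolding on_line_def by simp
qed

lemma tangent_map:
  fixes g :: "complex \<Rightarrow> complex" and Oc \<omega> :: complex
  assumes w: "\<omega> \<noteq> 0" and gdef: "\<And>z. g z = Oc + \<omega> * z"
    and mem: "\<And>z. g z \<in> C \<longleftrightarrow> z \<in> C'"
    and tl: "tangent_line C (g a) (g b)"
  shows "tangent_line C' a b"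
proof -
  have surj: "\<And>X. X = g ((X - Oc) / \<omega>)" using w gdef by simp
  have inj: "\<And>x y. g x = g y \<Longrightarrow> x = y" using w gdef by simp
  have ab: "g a \<noteq> g b" and ex1: "\<exists>!Z. Z \<in> C \<and> on_line (g a) (g b) Z" using tl unfolding tangent_line_def by auto
  have ol: "\<And>x. on_line (g a) (g b) (g x) \<longleftrightarrow> on_line a b x" using on_line_map[OF w] gdef by simp
  have "a \<noteq> b" using ab by auto
  moreover have "\<exists>!Z. Z \<in> C' \<and> on_line a b Z"
  proof -
    obtain Z where Z: "Z \<in> C" "on_line (g a) (g b) Z" using ex1 by auto
    define z where "z = (Z - Oc) / \<omega>"
    have gz: "g z = Z" unfolding z_def using surj by simp
    have "z \<in> C' \<and> on_line a b z" using Z gz mem ol by metis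
    moreover have "\<And>y. y \<in> C' \<and> on_line a b y \<Longrightarrow> y = z"
    proof -
      fix y assume "y \<in> C' \<and> on_line a b y"
      then have "g y \<in> C \<and> on_line (g a) (g b) (g y)" using mem ol by auto
      then have "g y = Z" using ex1 Z by auto
      then show "y = z" using gz inj by auto
    qed
    ultimately show ?thesis by blast
  qed
  ultimately show ?thesis unfolding tangent_line_def by blast
qed

lemma rot_cross2:
  fixes \<omega> u v :: complex
  assumes "cmod \<omega> = 1"
  shows "cross2 (cnj \<omega> * u) (cnj \<omega> * v) = cross2 u v"
proof -
  have h: "(Re \<omega>)^2 + (Im \<omega>)^2 = 1" using assms unfolding cmod_def by (simp add: power2_eq_iff_nonneg)
  show ?thesis unfolding cross2_def using h by simp algebra
qed

lemma rot_inner: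
  fixes \<omega> u v :: complex
  assumes "cmod \<omega> = 1"
  shows "inner (cnj \<omega> * u) (cnj \<omega> * v) = inner u v"
proof -
  have h: "(Re \<omega>)^2 + (Im \<omega>)^2 = 1" using assms unfolding cmod_def by (simp add: power2_eq_iff_nonneg)
  show ?thesis unfolding inner_complex_def using h by simp algebra
qed

lemma rot_vec_angle:
  fixes \<omega> u v :: complex
  assumes "cmod \<omega> = 1"
  shows "vec_angle (cnj \<omega> * u) (cnj \<omega> * v) = vec_angle u v"
  unfolding vec_angle_def rot_inner[OF assms] using assms by (simp add: norm_mult)

theorem theorem4:
  fixes F1 F2 :: complex and sc se :: real and N :: nat and P :: "int \<Rightarrow> complex"
  assumes "is_ellipse_param F1 F2 sc"
    and "is_ellipse_param F1 F2 se"
    and "sc < se"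
    and "periodic_billiard (ellipse F1 F2 se) (ellipse F1 F2 sc) N P"
  shows "(even N \<longrightarrow> (\<Sum>i=1..int N. (-1) ^ nat i * sin (ext_angle P i)) = 0) \<and>
         (4 dvd N \<longrightarrow> (\<Sum>i=1..int N div 2. (-1) ^ nat i * sin (ext_angle P i)) = 0)"
proof -
  define Oc where "Oc = (F1 + F2) / 2"
  define f where "f = dist F1 F2 / 2"
  define \<omega> where "\<omega> = (if F1 = F2 then 1 else (F1 - F2) / of_real (cmod (F1 - F2)))"
  have w1: "cmod \<omega> = 1"
  proof (cases "F1 = F2")
    case True then show ?thesis unfolding \<omega>_def by simp
  next
    case False then show ?thesis unfolding \<omega>_def by (simp add: norm_divide)
  qed
  have w0: "\<omega> \<noteq> 0" using w1 by auto
  have wc: "\<omega> * cnj \<omega> = 1"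
  proof -
    have "complex_of_real ((cmod \<omega>)^2) = \<omega> * cnj \<omega>" by (rule complex_norm_square)
    then show ?thesis using w1 by simp
  qed
  have F1e: "F1 = Oc + \<omega> * of_real f" and F2e: "F2 = Oc - \<omega> * of_real f"
  proof -
    have "F1 = Oc + \<omega> * of_real f \<and> F2 = Oc - \<omega> * of_real f"
    proof (cases "F1 = F2")
      case True then show ?thesis unfolding \<omega>_def f_def Oc_def by simp
    next
      case False
      then have nz: "complex_of_real (cmod (F1 - F2)) \<noteq> 0" by simp
      have "\<omega> * of_real f = (F1 - F2) / 2" unfolding \<omega>_def f_def dist_norm using False nz
        by (simp add: field_simps)
      then show ?thesis unfolding Oc_def by (simp add: field_simps)
    qed
    then show "F1 = Oc + \<omega> * of_real f" "F2 = Oc - \<omega> * of_real f" by auto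
  qed
  define g where "g z = Oc + \<omega> * z" for z
  define P' where "P' j = cnj \<omega> * (P j - Oc)" for j
  have gP: "g (P' j) = P j" for j
  proof -
    have "g (P' j) = Oc + (\<omega> * cnj \<omega>) * (P j - Oc)" unfolding g_def P'_def by (simp add: algebra_simps)
    then show ?thesis using wc by simp
  qed
  have mem: "g z \<in> ellipse F1 F2 s \<longleftrightarrow> z \<in> ellipse (of_real f) (- of_real f) s" for s z
  proof -
    have "dist (g z) F1 = cmod (\<omega> * (z - of_real f))" unfolding g_def dist_norm F1e by (simp add: algebra_simps)
    also have "\<dots> = dist z (of_real f)" using w1 by (simp add: norm_mult dist_norm)
    finally have d1: "dist (g z) F1 = dist z (of_real f)" .
    have "dist (g z) F2 = cmod (\<omega> * (z + of_real f))" unfolding g_def dist_norm F2e by (simp add: algebra_simps)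
    also have "\<dots> = dist z (- of_real f)" using w1 by (simp add: norm_mult dist_norm)
    finally have d2: "dist (g z) F2 = dist z (- of_real f)" .
    show ?thesis unfolding ellipse_def using d1 d2 by simp
  qed
  have pb: "\<forall>i. P i \<in> ellipse F1 F2 se" "\<forall>i. tangent_line (ellipse F1 F2 sc) (P i) (P (i + 1))"
    "\<forall>i. cross2 (P i - P (i - 1)) (P (i + 1) - P i) > 0" "\<forall>i. P (i + int N) = P i"
    using assms(4) unfolding periodic_billiard_def by auto
  have f0: "0 \<le> f" unfolding f_def by simp
  have fsc: "f < sc" using assms(1) unfolding is_ellipse_param_def f_def by simp
  have onE: "P' j \<in> ellipse (of_real f) (- of_real f) se" for j
    using pb(1) gP mem by metis
  have tl: "tangent_line (ellipse (of_real f) (- of_real f) sc) (P' j) (P' (j + 1))" for j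
  proof (rule tangent_map[OF w0])
    show "\<And>z. g z = Oc + \<omega> * z" unfolding g_def ..
    show "\<And>z. g z \<in> ellipse F1 F2 sc \<longleftrightarrow> z \<in> ellipse (of_real f) (- of_real f) sc" by (rule mem)
    show "tangent_line (ellipse F1 F2 sc) (g (P' j)) (g (P' (j + 1)))" unfolding gP using pb(2) by simp
  qed
  have dif: "P' a - P' b = cnj \<omega> * (P a - P b)" for a b unfolding P'_def by (simp add: algebra_simps)
  have turn: "cross2 (P' j - P' (j - 1)) (P' (j + 1) - P' j) > 0" for j
    unfolding dif rot_cross2[OF w1] using pb(3) by simp
  have per: "P' (j + int N) = P' j" for j unfolding P'_def using pb(4) by simp
  have ext: "ext_angle P' i = ext_angle P i" for i
    unfolding ext_angle_def dif rot_vec_angle[OF w1] ..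
  have "(even N \<longrightarrow> (\<Sum>i=1..int N. (-1) ^ nat i * sin (ext_angle P' i)) = 0) \<and>
         (4 dvd N \<longrightarrow> (\<Sum>i=1..int N div 2. (-1) ^ nat i * sin (ext_angle P' i)) = 0)"
    by (rule std_main[OF f0 fsc assms(3) onE tl turn per])
  then show ?thesis unfolding ext .
qed


end
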